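(* If $\gcd(A^3,B^2)=S(x,y)$, then $\gcd(f^3,g^2)=S(t,1)$.
   Context: Fix $\upsilon\in\{1,2\}$ and positive integers $m,\tau$ with $m=1$ or $\upsilon\tau=1$. Let $f,g\in\mathbb{Z}[t]$ with $4f^3+27g^2\ne0$, no common real root, and $\max\{\frac12\deg f,\frac13\deg g\}=\frac{2m}{\upsilon\tau}$. Let $\varsigma=2m$ if $\upsilon=1$, $\varsigma=1$ if $\upsilon=2$; $A(x,y)=y^{2\varsigma}f(x/y^\tau)$, $B(x,y)=y^{3\varsigma}g(x/y^\tau)\in\mathbb{Z}[x,y]$. For polynomials $F,G$ (in any number of variables), $\gcd(F,G)$ denotes the polynomial with integer coefficients, of highest possible degree and smallest possible positive leading coefficient (in lexicographic ordering), dividing both $F$ and $G$ in the polynomial ring over $\mathbb{Q}$. *)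

theory Defs
  imports "HOL-Computational_Algebra.Polynomial" Complex_Main
begin

text \<open>Bivariate polynomials in x,y are represented as int poly poly:
  the outer variable is x, coefficients are polynomials in y.
  Lexicographic order with x > y: the leading coefficient is
  lead_coeff (lead_coeff P).\<close>

definition total_degree :: "'a::zero poly poly \<Rightarrow> nat" where
  "total_degree P = Max ({0} \<union> {i + degree (coeff P i) | i. coeff P i \<noteq> 0})"

definition ratQ1 :: "int poly \<Rightarrow> rat poly" where
  "ratQ1 p = map_poly of_int p"

definition ratQ2 :: "int poly poly \<Rightarrow> rat poly poly" where
  "ratQ2 P = map_poly (map_poly of_int) P"

definition gcd_cand1 :: "int poly \<Rightarrow> int poly \<Rightarrow> int poly \<Rightarrow> bool" where
  "gcd_cand1 F G D \<longleftrightarrow> ratQ1 D dvd ratQ1 F \<and> ratQ1 D dvd ratQ1 G \<and>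
     (\<forall>E::rat poly. E dvd ratQ1 F \<and> E dvd ratQ1 G \<longrightarrow> degree E \<le> degree D) \<and>
     lead_coeff D > 0"

definition gcdQ1 :: "int poly \<Rightarrow> int poly \<Rightarrow> int poly" where
  "gcdQ1 F G = (THE D. gcd_cand1 F G D \<and>
     (\<forall>D'. gcd_cand1 F G D' \<longrightarrow> lead_coeff D \<le> lead_coeff D'))"

definition gcd_cand2 :: "int poly poly \<Rightarrow> int poly poly \<Rightarrow> int poly poly \<Rightarrow> bool" where
  "gcd_cand2 F G D \<longleftrightarrow> ratQ2 D dvd ratQ2 F \<and> ratQ2 D dvd ratQ2 G \<and>
     (\<forall>E::rat poly poly. E dvd ratQ2 F \<and> E dvd ratQ2 G \<longrightarrow> total_degree E \<le> total_degree D) \<and>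
     lead_coeff (lead_coeff D) > 0"

definition gcdQ2 :: "int poly poly \<Rightarrow> int poly poly \<Rightarrow> int poly poly" where
  "gcdQ2 F G = (THE D. gcd_cand2 F G D \<and>
     (\<forall>D'. gcd_cand2 F G D' \<longrightarrow> lead_coeff (lead_coeff D) \<le> lead_coeff (lead_coeff D')))"

text \<open>Weighted homogenization: y^s * f(x / y^tau) = sum_i f_i x^i y^(s - tau*i)
  (exponents are nonnegative under the standing hypotheses).\<close>

definition whom :: "int poly \<Rightarrow> nat \<Rightarrow> nat \<Rightarrow> int poly poly" where
  "whom f s tau = (\<Sum>i\<le>degree f. monom (monom (coeff f i) (s - tau * i)) i)"

definition at_y1 :: "int poly poly \<Rightarrow> int poly" where
  "at_y1 S = map_poly (\<lambda>c. poly c 1) S"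

end

theory Submission imports Defs "HOL-Computational_Algebra.Computational_Algebra" "HOL-Computational_Algebra.Field_as_Ring" begin

lemma map_poly_add_hom:
  assumes "h 0 = 0" "\<And>a b. h (a + b) = h a + h b"
  shows "map_poly h (p + q) = map_poly h p + map_poly h q"
  by (intro poly_eqI) (simp add: coeff_map_poly assms)

lemma map_poly_mult_hom:
  fixes h :: "'a::comm_semiring_1 \<Rightarrow> 'b::comm_semiring_1"
  assumes h0: "h 0 = 0" and ha: "\<And>a b. h (a + b) = h a + h b" and hm: "\<And>a b. h (a * b) = h a * h b"
  shows "map_poly h (p * q) = map_poly h p * map_poly h q"
proof (induction p)
  case 0
  then show ?case by simp
next
  case (pCons a p)
  have "map_poly h (pCons a p * q) = map_poly h (smult a q + pCons 0 (p * q))"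
    by (simp add: mult_pCons_left)
  also have "\<dots> = smult (h a) (map_poly h q) + pCons 0 (map_poly h p * map_poly h q)"
    by (simp add: map_poly_add_hom[where h=h, OF h0 ha] map_poly_smult[where f=h, OF h0 hm] map_poly_pCons[where f=h, OF h0] pCons.IH h0)
  also have "\<dots> = map_poly h (pCons a p) * map_poly h q"
    by (simp add: map_poly_pCons[where f=h, OF h0] mult_pCons_left)
  finally show ?case .
qed

lemma map_poly_power_hom:
  fixes h :: "'a::comm_semiring_1 \<Rightarrow> 'b::comm_semiring_1"
  assumes h0: "h 0 = 0" and ha: "\<And>a b. h (a + b) = h a + h b" and hm: "\<And>a b. h (a * b) = h a * h b"
    and h1: "h 1 = 1"
  shows "map_poly h (p ^ n) = map_poly h p ^ n"
  by (induction n) (simp_all add: map_poly_mult_hom[OF h0 ha hm] h1)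

lemma ratQ1_mult: "ratQ1 (p * q) = ratQ1 p * ratQ1 q"
  unfolding ratQ1_def by (rule map_poly_mult_hom) auto

lemma ratQ1_power: "ratQ1 (p ^ n) = ratQ1 p ^ n"
  unfolding ratQ1_def by (rule map_poly_power_hom) auto

lemma ratQ1_coeff: "coeff (ratQ1 p) i = of_int (coeff p i)"
  unfolding ratQ1_def by (simp add: coeff_map_poly)

lemma ratQ2_coeff: "coeff (ratQ2 p) i = ratQ1 (coeff p i)"
  unfolding ratQ2_def ratQ1_def by (simp add: coeff_map_poly)

lemma ratQ1_eq_iff[simp]: "ratQ1 p = ratQ1 q \<longleftrightarrow> p = q"
  by (auto simp: poly_eq_iff ratQ1_coeff)

lemma ratQ1_0_iff[simp]: "ratQ1 p = 0 \<longleftrightarrow> p = 0"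
  using ratQ1_eq_iff[of p 0] by (simp add: ratQ1_def)

lemma ratQ1_degree[simp]: "degree (ratQ1 p) = degree p"
  unfolding ratQ1_def by (simp add: degree_map_poly)

lemma ratQ2_eq_iff[simp]: "ratQ2 p = ratQ2 q \<longleftrightarrow> p = q"
  by (auto simp: poly_eq_iff[of "ratQ2 p"] ratQ2_coeff poly_eq_iff[of p])

lemma ratQ2_power: "ratQ2 (p ^ n) = ratQ2 p ^ n"
proof -
  have "map_poly (map_poly (of_int::int\<Rightarrow>rat)) (p ^ n) = map_poly (map_poly of_int) p ^ n"
    by (rule map_poly_power_hom)
       (auto simp: map_poly_add_hom map_poly_mult_hom)
  then show ?thesis unfolding ratQ2_def .
qed


definition W :: "nat \<Rightarrow> nat \<Rightarrow> 'a::comm_ring_1 poly \<Rightarrow> 'a poly poly" where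
  "W tau s p = (\<Sum>i\<le>degree p. monom (monom (coeff p i) (s - tau * i)) i)"

lemma whom_W: "whom f s tau = W tau s f"
  unfolding whom_def W_def ..

lemma coeff_W: "coeff (W tau s p) n = monom (coeff p n) (s - tau * n)"
proof -
  have "coeff (W tau s p) n = (\<Sum>i\<le>degree p. if n = i then monom (coeff p i) (s - tau * i) else 0)"
    unfolding W_def coeff_sum coeff_monom by (rule sum.cong) auto
  also have "\<dots> = monom (coeff p n) (s - tau * n)"
    by (cases "n \<le> degree p") (auto simp: coeff_eq_0)
  finally show ?thesis .
qed

lemma W_0[simp]: "W tau s 0 = 0"
  by (simp add: W_def)

lemma W_add: "W tau s (p + q) = W tau s p + W tau s q"
  by (rule poly_eqI) (simp add: coeff_W add_monom)

lemma W_smult: "W tau s (smult c p) = smult [:c:] (W tau s p)"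
  by (rule poly_eqI) (simp add: coeff_W smult_monom)

lemma W_one: "W tau s 1 = [:monom 1 s:]"
  by (rule poly_eqI) (auto simp: coeff_W coeff_pCons split: nat.splits)

lemma W_mult:
  fixes p q :: "'a::comm_ring_1 poly"
  assumes "tau * degree p \<le> s" "tau * degree q \<le> r"
  shows "W tau s p * W tau r q = W tau (s + r) (p * q)"
proof (rule poly_eqI)
  fix n
  have "coeff (W tau s p * W tau r q) n =
        (\<Sum>i\<le>n. monom (coeff p i) (s - tau * i) * monom (coeff q (n - i)) (r - tau * (n - i)))"
    by (simp only: coeff_mult coeff_W)
  also have "\<dots> = (\<Sum>i\<le>n. monom (coeff p i * coeff q (n - i)) (s + r - tau * n))"
  proof (rule sum.cong)
    fix i assume i: "i \<in> {..n}"
    show "monom (coeff p i) (s - tau * i) * monom (coeff q (n - i)) (r - tau * (n - i)) =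
          monom (coeff p i * coeff q (n - i)) (s + r - tau * n)"
    proof (cases "coeff p i = 0 \<or> coeff q (n - i) = 0")
      case True
      then show ?thesis by (auto simp: mult_monom)
    next
      case False
      then have "i \<le> degree p" "n - i \<le> degree q" by (auto intro: le_degree)
      then have "tau * i \<le> tau * degree p" "tau * (n - i) \<le> tau * degree q"
        by simp_all
      then have "tau * i \<le> s" "tau * (n - i) \<le> r"
        using assms by linarith+
      moreover have "tau * n = tau * i + tau * (n - i)" using i
        by (simp add: add_mult_distrib2[symmetric])
      ultimately have "s - tau * i + (r - tau * (n - i)) = s + r - tau * n" by linarith
      then show ?thesis by (simp add: mult_monom)
    qed
  qed simp
  also have "\<dots> = coeff (W tau (s + r) (p * q)) n"
    by (subst coeff_W, subst coeff_mult, rule monom_sum[symmetric])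
  finally show "coeff (W tau s p * W tau r q) n = coeff (W tau (s + r) (p * q)) n" .
qed

lemma W_power:
  fixes p :: "'a::comm_ring_1 poly"
  assumes "tau * degree p \<le> s"
  shows "W tau s p ^ n = W tau (n * s) (p ^ n)"
proof (induction n)
  case 0
  then show ?case by (simp add: W_one)
next
  case (Suc n)
  have "tau * degree (p ^ n) \<le> n * s"
  proof -
    have "tau * degree (p ^ n) \<le> tau * (n * degree p)"
      by (intro mult_le_mono2) (metis degree_power_le mult.commute)
    also have "\<dots> = n * (tau * degree p)" by simp
    also have "\<dots> \<le> n * s" using assms by simp
    finally show ?thesis .
  qed
  then show ?case using Suc assms by (simp add: W_mult)
qed

lemma W_shift:
  fixes p :: "'a::comm_ring_1 poly"
  assumes "tau * degree p \<le> s"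
  shows "[:monom 1 j:] * W tau s p = W tau (j + s) p"
  using W_mult[of tau 1 j p s] assms by (simp add: W_one)

lemma W_degree:
  fixes p :: "'a::comm_ring_1 poly"
  assumes "p \<noteq> 0"
  shows "degree (W tau s p) = degree p" "lead_coeff (W tau s p) = monom (lead_coeff p) (s - tau * degree p)"
proof -
  have "coeff (W tau s p) (degree p) \<noteq> 0" using assms by (simp add: coeff_W)
  moreover have "\<forall>i > degree p. coeff (W tau s p) i = 0" by (simp add: coeff_W coeff_eq_0)
  ultimately show d: "degree (W tau s p) = degree p"
    by (intro antisym degree_le le_degree) auto
  show "lead_coeff (W tau s p) = monom (lead_coeff p) (s - tau * degree p)"
    by (simp add: d coeff_W)
qed

lemma W_eq_0_iff[simp]: "W tau s p = 0 \<longleftrightarrow> p = 0"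
  proof
  assume "W tau s p = 0"
  then have "\<forall>n. monom (coeff p n) (s - tau * n) = 0" by (metis coeff_W coeff_0)
  then show "p = 0" by (metis monom_eq_0_iff poly_eqI coeff_0)
qed simp

lemma ratQ2_whom: "ratQ2 (whom f s tau) = W tau s (ratQ1 f)"
  by (rule poly_eqI) (simp add: ratQ2_coeff whom_W coeff_W ratQ1_def map_poly_monom coeff_map_poly)

lemma at_y1_whom: "at_y1 (whom f s tau) = f"
  by (rule poly_eqI) (simp add: at_y1_def coeff_map_poly whom_W coeff_W poly_monom)

lemma y_not_dvd_W:
  fixes u :: "'a::idom poly"
  assumes "u \<noteq> 0"
  shows "\<not> [:monom 1 1:] dvd W tau (tau * degree u) u"
proof
  assume "[:monom 1 1:] dvd W tau (tau * degree u) u"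
  then obtain R where R: "W tau (tau * degree u) u = [:monom 1 1:] * R" by (elim dvdE)
  have "coeff (W tau (tau * degree u) u) (degree u) = [:lead_coeff u:]"
    by (simp add: coeff_W monom_0)
  also have "coeff (W tau (tau * degree u) u) (degree u) = monom 1 1 * coeff R (degree u)"
    by (simp add: R)
  finally have "monom 1 1 dvd [:lead_coeff u:]" by (intro dvdI) (rule sym)
  moreover have "[:lead_coeff u:] \<noteq> 0" using assms by simp
  ultimately have "degree (monom (1::'a) 1) \<le> degree [:lead_coeff u:]"
    by (rule dvd_imp_degree_le)
  then show False by (simp add: degree_monom_eq)
qed


section \<open>Total degree via substitution\<close>

definition psi :: "'a::comm_ring_1 poly \<Rightarrow> 'a poly poly" where
  "psi c = poly (map_poly (\<lambda>a. [:[:a:]:]) c) [:0, [:0, 1:]:]"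

definition Phi :: "'a::comm_ring_1 poly poly \<Rightarrow> 'a poly poly" where
  "Phi X = poly (map_poly psi X) [:0, 1:]"

lemma psi_0[simp]: "psi 0 = 0"
  by (simp add: psi_def)

lemma psi_pCons: "psi (pCons a c) = [:[:a:]:] + [:0, [:0, 1:]:] * psi c"
  by (simp add: psi_def map_poly_pCons)

lemma psi_add: "psi (a + b) = psi a + psi b"
  unfolding psi_def by (subst map_poly_add_hom) (auto simp: poly_add)

lemma psi_mult: "psi (a * b) = psi a * psi b"
  unfolding psi_def by (subst map_poly_mult_hom) (auto simp: poly_mult)

lemma coeff_psi: "coeff (coeff (psi c) n) j = (if j = n then coeff c j else 0)"
proof (induction c arbitrary: n j)
  case 0
  then show ?case by simp
next
  case (pCons a c)
  have e: "[:0, [:0, 1:]:] * psi c = pCons 0 (smult [:0, 1:] (psi c))"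
    by (simp add: mult_pCons_left)
  show ?case
  proof (cases n)
    case 0
    then show ?thesis by (cases j) (auto simp: psi_pCons e coeff_pCons)
  next
    case (Suc m)
    have "coeff (coeff (psi (pCons a c)) n) j = coeff ([:0, 1:] * coeff (psi c) m) j"
      using Suc by (simp add: psi_pCons e coeff_pCons)
    also have "[:0, 1:] * coeff (psi c) m = pCons 0 (coeff (psi c) m)"
      by (simp add: mult_pCons_left)
    finally show ?thesis using Suc pCons.IH
      by (cases j) (auto simp: coeff_pCons)
  qed
qed

lemma Phi_pCons: "Phi (pCons c X) = psi c + [:0, 1:] * Phi X"
  by (simp add: Phi_def map_poly_pCons)

lemma Phi_mult: "Phi (X * Y) = Phi X * Phi Y"
  unfolding Phi_def by (subst map_poly_mult_hom) (auto simp: poly_mult psi_add psi_mult)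

lemma coeff_Phi: "coeff (coeff (Phi X) n) j = (if j \<le> n then coeff (coeff X (n - j)) j else 0)"
proof (induction X arbitrary: n j)
  case 0
  then show ?case by (simp add: Phi_def)
next
  case (pCons c X)
  have e: "[:0, 1:] * Phi X = pCons 0 (Phi X)"
    by (simp add: mult_pCons_left)
  show ?case
  proof (cases n)
    case 0
    then show ?thesis by (simp add: Phi_pCons e coeff_psi)
  next
    case (Suc m)
    have "coeff (coeff (Phi (pCons c X)) n) j = (if j = n then coeff c j else 0) + coeff (coeff (Phi X) m) j"
      using Suc by (simp add: Phi_pCons e coeff_psi)
    then show ?thesis using Suc pCons.IH
      by (cases "j \<le> m") (auto simp: coeff_pCons Suc_diff_le split: nat.splits)
  qed
qed

lemma td_finite: "finite {i + degree (coeff P i) |i. coeff P i \<noteq> 0}"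
proof -
  have "{i + degree (coeff P i) |i. coeff P i \<noteq> 0} \<subseteq> (\<lambda>i. i + degree (coeff P i)) ` {..degree P}"
    by (auto intro: le_degree)
  then show ?thesis by (rule finite_subset) simp
qed

lemma td_ge: "coeff P i \<noteq> 0 \<Longrightarrow> i + degree (coeff P i) \<le> total_degree P"
  unfolding total_degree_def using td_finite[of P] by (intro Max_ge) auto

lemma td_le: "(\<And>i. coeff P i \<noteq> 0 \<Longrightarrow> i + degree (coeff P i) \<le> n) \<Longrightarrow> total_degree P \<le> n"
  unfolding total_degree_def using td_finite[of P] by (subst Max_le_iff) auto

lemma td_attained:
  assumes "P \<noteq> 0"
  shows "\<exists>i. coeff P i \<noteq> 0 \<and> total_degree P = i + degree (coeff P i)"
proof -
  have "total_degree P \<in> {0} \<union> {i + degree (coeff P i) |i. coeff P i \<noteq> 0}"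
    unfolding total_degree_def using td_finite[of P] by (intro Max_in) auto
  moreover obtain i0 where "coeff P i0 \<noteq> 0" using assms by (metis leading_coeff_0_iff)
  ultimately show ?thesis using td_ge[of P] by fastforce
qed

lemma degree_Phi: "degree (Phi (P :: 'a::comm_ring_1 poly poly)) = total_degree P"
proof (rule antisym)
  show "degree (Phi P) \<le> total_degree P"
  proof (rule degree_le, intro allI impI)
    fix n assume n: "total_degree P < n"
    show "coeff (Phi P) n = 0"
    proof (rule poly_eqI)
      fix j
      show "coeff (coeff (Phi P) n) j = coeff 0 j"
      proof (cases "j \<le> n \<and> coeff (coeff P (n - j)) j \<noteq> 0")
        case True
        then have "coeff P (n - j) \<noteq> 0" by auto
        then have "(n - j) + degree (coeff P (n - j)) \<le> total_degree P" by (rule td_ge)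
        moreover have "j \<le> degree (coeff P (n - j))" using True by (auto intro: le_degree)
        ultimately show ?thesis using True n by linarith
      next
        case False
        then show ?thesis by (auto simp: coeff_Phi)
      qed
    qed
  qed
next
  show "total_degree P \<le> degree (Phi P)"
  proof (cases "P = 0")
    case True
    then show ?thesis by (simp add: total_degree_def)
  next
    case False
    then obtain i where i: "coeff P i \<noteq> 0" "total_degree P = i + degree (coeff P i)"
      using td_attained by blast
    have "coeff (coeff (Phi P) (total_degree P)) (degree (coeff P i)) \<noteq> 0"
      using i by (simp add: coeff_Phi)
    then have "coeff (Phi P) (total_degree P) \<noteq> 0" by auto
    then show ?thesis by (rule le_degree)
  qed
qed

lemma Phi_eq_0_iff: "Phi P = 0 \<longleftrightarrow> P = 0"
proof
  assume "Phi P = 0"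
  then have "coeff (coeff P i) j = 0" for i j
    using coeff_Phi[of P "i + j" j] by simp
  then show "P = 0" by (simp add: poly_eq_iff)
qed (simp add: Phi_def)

lemma td_mult:
  fixes P Q :: "'a::idom poly poly"
  assumes "P \<noteq> 0" "Q \<noteq> 0"
  shows "total_degree (P * Q) = total_degree P + total_degree Q"
  using assms by (simp add: degree_Phi[symmetric] Phi_mult degree_mult_eq Phi_eq_0_iff)

lemma td_dvd:
  fixes E Y :: "'a::idom poly poly"
  assumes "E dvd Y" "Y \<noteq> 0"
  shows "total_degree E \<le> total_degree Y"
  using assms by (auto elim!: dvdE simp: td_mult)

lemma td_zero_const:
  assumes "total_degree (R :: 'a::comm_ring_1 poly poly) = 0"
  shows "R = [:[:coeff (coeff R 0) 0:]:]"
proof (rule poly_eqI)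
  fix i
  show "coeff R i = coeff [:[:coeff (coeff R 0) 0:]:] i"
  proof (cases "coeff R i = 0")
    case False
    have le: "i + degree (coeff R i) \<le> 0" using td_ge[OF False] assms by linarith
    then have i0: "i = 0" by linarith
    from le have "degree (coeff R 0) = 0" unfolding i0 by linarith
    with i0 show ?thesis by (metis coeff_pCons_0 degree_0_id)
  qed (auto simp: coeff_pCons split: nat.splits)
qed

lemma td_ratQ2: "total_degree (ratQ2 D) = total_degree D"
  unfolding total_degree_def by (simp add: ratQ2_coeff)


section \<open>Core gcd computation\<close>

definition yy :: "rat poly poly" where "yy = [:monom 1 1:]"

lemma yy_pow: "yy ^ j = [:monom 1 j:]"
  by (simp add: yy_def poly_const_pow monom_power)

lemma yy_nz[simp]: "yy \<noteq> 0" "yy ^ j \<noteq> 0"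
  by (simp_all add: yy_def)

lemma W_shift_yy:
  fixes p :: "rat poly"
  assumes "tau * degree p \<le> s"
  shows "yy ^ j * W tau s p = W tau (j + s) p"
  unfolding yy_pow by (rule W_shift[OF assms])

lemma prime_yy: "prime_elem yy"
proof -
  have "monom (1::rat) 1 = [:0, 1:]" by (simp add: monom_Suc monom_0)
  then show ?thesis by (simp add: yy_def prime_elem_const_poly_iff prime_elem_linear_field_poly)
qed

lemma decomp:
  fixes P d :: "rat poly"
  assumes "d dvd P" "d \<noteq> 0" "tau * degree P \<le> s"
  shows "W tau s P = W tau (tau * degree d) d * (yy ^ (s - tau * degree P) * W tau (tau * degree (P div d)) (P div d))"
proof (cases "P = 0")
  case True
  then show ?thesis by simp
next
  case False
  define u where "u = P div d"
  have Pdu: "P = d * u" using assms(1) unfolding u_def by simp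
  with False have u0: "u \<noteq> 0" by auto
  have deg: "degree P = degree d + degree u" using Pdu assms(2) u0 by (simp add: degree_mult_eq)
  define al where "al = s - tau * degree P"
  have eq1: "yy ^ al * W tau (tau * degree u) u = W tau (al + tau * degree u) u"
    by (rule W_shift_yy) simp
  have eq2: "W tau (tau * degree d) d * W tau (al + tau * degree u) u
      = W tau (tau * degree d + (al + tau * degree u)) (d * u)"
    by (rule W_mult) auto
  have eq3: "tau * degree d + (al + tau * degree u) = s"
    using assms(3) deg unfolding al_def by (simp add: add_mult_distrib2)
  have "W tau (tau * degree d) d * (yy ^ al * W tau (tau * degree u) u) = W tau s (d * u)"
    by (simp only: eq1 eq2 eq3)
  then show ?thesis unfolding al_def u_def[symmetric] Pdu[symmetric] by (rule sym)
qed

lemma coprime_bezout_W: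
  fixes u v :: "rat poly"
  assumes "coprime u v"
  obtains M X1 X2 where "yy ^ M = X1 * W tau (tau * degree u) u + X2 * W tau (tau * degree v) v"
proof -
  obtain a b where ab: "bezout_coefficients u v = (a, b)" by force
  from bezout_coefficients[OF ab] assms have ab1: "a * u + b * v = 1"
    by (simp add: coprime_imp_gcd_eq_1)
  define M where "M = tau * (degree a + degree u) + tau * (degree b + degree v)"
  have "yy ^ M = W tau M 1" by (simp only: W_one yy_pow)
  also have "\<dots> = W tau M (a * u) + W tau M (b * v)" by (simp add: ab1[symmetric] W_add)
  also have "W tau M (a * u) = W tau (M - tau * degree u) a * W tau (tau * degree u) u"
  proof -
    have "W tau (M - tau * degree u) a * W tau (tau * degree u) u = W tau (M - tau * degree u + tau * degree u) (a * u)"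
      by (rule W_mult) (auto simp: M_def add_mult_distrib2)
    moreover have "M - tau * degree u + tau * degree u = M" by (simp add: M_def add_mult_distrib2)
    ultimately show ?thesis by simp
  qed
  also have "W tau M (b * v) = W tau (M - tau * degree v) b * W tau (tau * degree v) v"
  proof -
    have "W tau (M - tau * degree v) b * W tau (tau * degree v) v = W tau (M - tau * degree v + tau * degree v) (b * v)"
      by (rule W_mult) (auto simp: M_def add_mult_distrib2)
    moreover have "M - tau * degree v + tau * degree v = M" by (simp add: M_def add_mult_distrib2)
    ultimately show ?thesis by simp
  qed
  finally show ?thesis by (rule that)
qed


lemma gcd_yy_part:
  fixes u v :: "rat poly"
  assumes cop: "coprime u v" and uv: "u \<noteq> 0 \<or> v \<noteq> 0"
    and ua: "u = 0 \<Longrightarrow> be \<le> al" and vb: "v = 0 \<Longrightarrow> al \<le> be"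
  shows "gcd (yy ^ al * W tau (tau * degree u) u) (yy ^ be * W tau (tau * degree v) v) dvd yy ^ min al be"
proof -
  define U where "U = W tau (tau * degree u) u"
  define V where "V = W tau (tau * degree v) v"
  define H where "H = gcd (yy ^ al * U) (yy ^ be * V)"
  obtain M X1 X2 where B: "yy ^ M = X1 * U + X2 * V"
    using coprime_bezout_W[OF cop] unfolding U_def V_def by blast
  have H1: "H dvd yy ^ al * U" and H2: "H dvd yy ^ be * V" unfolding H_def by auto
  have "H dvd (yy ^ al * U) * (yy ^ be * X1) + (yy ^ be * V) * (yy ^ al * X2)"
    by (rule dvd_add; rule dvd_mult2; fact)
  also have "(yy ^ al * U) * (yy ^ be * X1) + (yy ^ be * V) * (yy ^ al * X2) = yy ^ (al + be) * yy ^ M"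
    unfolding B by (simp add: power_add algebra_simps)
  also have "\<dots> = yy ^ (al + be + M)" by (simp add: power_add)
  finally have Hd: "H dvd yy ^ (al + be + M)" .
  have pr: "prime (normalize yy)" using prime_yy by simp
  have "H dvd normalize yy ^ (al + be + M)"
    using Hd by (simp add: normalize_power[symmetric])
  then obtain m where m: "normalize H = normalize (normalize yy ^ m)"
    using divides_primepow_weak[OF pr] by blast
  then have m': "normalize H = normalize (yy ^ m)" by (simp add: normalize_power_normalize)
  have Hm: "H dvd yy ^ m" and mH: "yy ^ m dvd H"
    using m' by (metis dvd_normalize_iff dvd_refl normalize_dvd_iff)+
  have yy0: "yy \<noteq> 0" by simp
  have claimU: "m \<le> al" if "u \<noteq> 0"
  proof (rule ccontr)
    assume "\<not> m \<le> al"
    then have e: "yy ^ m = yy ^ al * yy ^ (m - al)" by (simp add: power_add[symmetric])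
    have "yy ^ al * yy ^ (m - al) dvd yy ^ al * U"
      using mH H1 unfolding e by (rule dvd_trans)
    then have "yy ^ (m - al) dvd U" by (subst (asm) dvd_times_left_cancel_iff) simp_all
    moreover have "yy dvd yy ^ (m - al)" using \<open>\<not> m \<le> al\<close>
      by (metis Suc_diff_Suc dvd_triv_left not_le power_Suc)
    ultimately have "yy dvd U" by (rule dvd_trans[rotated])
    then show False using y_not_dvd_W[OF that] unfolding U_def yy_def by simp
  qed
  have claimV: "m \<le> be" if "v \<noteq> 0"
  proof (rule ccontr)
    assume "\<not> m \<le> be"
    then have e: "yy ^ m = yy ^ be * yy ^ (m - be)" by (simp add: power_add[symmetric])
    have "yy ^ be * yy ^ (m - be) dvd yy ^ be * V"
      using mH H2 unfolding e by (rule dvd_trans)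
    then have "yy ^ (m - be) dvd V" by (subst (asm) dvd_times_left_cancel_iff) simp_all
    moreover have "yy dvd yy ^ (m - be)" using \<open>\<not> m \<le> be\<close>
      by (metis Suc_diff_Suc dvd_triv_left not_le power_Suc)
    ultimately have "yy dvd V" by (rule dvd_trans[rotated])
    then show False using y_not_dvd_W[OF that] unfolding V_def yy_def by simp
  qed
  have "m \<le> min al be"
    using claimU claimV ua vb uv by (cases "u = 0"; cases "v = 0") auto
  then have "yy ^ m dvd yy ^ min al be" by (rule le_imp_power_dvd)
  with Hm have "H dvd yy ^ min al be" by (rule dvd_trans)
  then show ?thesis unfolding H_def U_def V_def .
qed


lemma core:
  fixes P Q :: "rat poly"
  assumes PQ: "P \<noteq> 0 \<or> Q \<noteq> 0" and dP: "tau * degree P \<le> s" and dQ: "tau * degree Q \<le> s"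
  defines "T \<equiv> W tau (tau * degree (gcd P Q) + min (s - tau * degree P) (s - tau * degree Q)) (gcd P Q)"
  shows "T dvd W tau s P" "T dvd W tau s Q"
    "E dvd W tau s P \<Longrightarrow> E dvd W tau s Q \<Longrightarrow> E dvd T"
proof -
  define d where "d = gcd P Q"
  have d0: "d \<noteq> 0" using PQ unfolding d_def by simp
  define u where "u = P div d"
  define v where "v = Q div d"
  have cop: "coprime u v" unfolding u_def v_def d_def using PQ by (rule div_gcd_coprime)
  have Pdu: "P = d * u" unfolding u_def d_def by simp
  have Qdv: "Q = d * v" unfolding v_def d_def by simp
  define al where "al = s - tau * degree P"
  define be where "be = s - tau * degree Q"
  define mu where "mu = min al be"
  define Dd where "Dd = W tau (tau * degree d) d"
  define U where "U = W tau (tau * degree u) u"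
  define V where "V = W tau (tau * degree v) v"
  have hP: "W tau s P = Dd * (yy ^ al * U)"
    unfolding Dd_def U_def al_def u_def using d0 dP unfolding d_def by (intro decomp) auto
  have hQ: "W tau s Q = Dd * (yy ^ be * V)"
    unfolding Dd_def V_def be_def v_def using d0 dQ unfolding d_def by (intro decomp) auto
  have hT: "T = yy ^ mu * Dd"
    unfolding T_def Dd_def mu_def al_def be_def d_def
    by (subst W_shift_yy) (simp_all add: add.commute)
  have pa: "yy ^ al = yy ^ mu * yy ^ (al - mu)" unfolding mu_def by (simp add: power_add[symmetric])
  have pb: "yy ^ be = yy ^ mu * yy ^ (be - mu)" unfolding mu_def by (simp add: power_add[symmetric])
  show "T dvd W tau s P" unfolding hP hT pa by (simp add: mult_ac)
  show "T dvd W tau s Q" unfolding hQ hT pb by (simp add: mult_ac)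
  assume E1: "E dvd W tau s P" and E2: "E dvd W tau s Q"
  have "E dvd gcd (Dd * (yy ^ al * U)) (Dd * (yy ^ be * V))"
    using E1 E2 unfolding hP hQ by (rule gcd_greatest)
  then have "E dvd Dd * gcd (yy ^ al * U) (yy ^ be * V)"
    by (simp add: gcd_mult_left)
  moreover have "gcd (yy ^ al * U) (yy ^ be * V) dvd yy ^ mu"
    unfolding U_def V_def mu_def
  proof (rule gcd_yy_part[OF cop])
    show "u \<noteq> 0 \<or> v \<noteq> 0" using PQ Pdu Qdv by auto
    show "be \<le> al" if "u = 0" using that Pdu unfolding al_def be_def by simp
    show "al \<le> be" if "v = 0" using that Qdv unfolding al_def be_def by simp
  qed
  then have "Dd * gcd (yy ^ al * U) (yy ^ be * V) dvd yy ^ mu * Dd"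
    by (simp add: mult.commute)
  ultimately show "E dvd T" unfolding hT by (rule dvd_trans)
qed


section \<open>Integer normalisation\<close>

lemma int_scale:
  fixes d0 :: "int poly" and c :: rat
  assumes cont: "content d0 = 1" and h: "\<And>i. c * of_int (coeff d0 i) \<in> \<int>"
  shows "c \<in> \<int>"
proof -
  obtain a b where ab: "quotient_of c = (a, b)" by force
  have b0: "b > 0" using ab by (rule quotient_of_denom_pos)
  have cop: "coprime a b" using ab by (rule quotient_of_coprime)
  have c: "c = of_int a / of_int b" using ab by (rule quotient_of_div)
  have "b dvd coeff d0 i" for i
  proof -
    obtain k where k: "c * of_int (coeff d0 i) = of_int k" using h[of i] by (elim Ints_cases)
    then have "of_int a * of_int (coeff d0 i) = (of_int (k * b) :: rat)"
      using b0 unfolding c by (simp add: field_simps)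
    then have "a * coeff d0 i = k * b" by (simp only: of_int_mult[symmetric] of_int_eq_iff)
    then have "b dvd a * coeff d0 i" by simp
    with cop show ?thesis by (metis coprime_commute coprime_dvd_mult_left_iff coprime_dvd_mult_right_iff)
  qed
  then have "[:b:] dvd d0" by (simp add: const_poly_dvd_iff)
  then have "b dvd 1" using cont by (simp add: const_poly_dvd_iff_dvd_content)
  with b0 have "b = 1" by simp
  then show ?thesis unfolding c by simp
qed

lemma denominators:
  fixes p :: "rat poly"
  shows "\<exists>n::int. n > 0 \<and> (\<forall>i. of_int n * coeff p i \<in> \<int>)"
proof (induction p)
  case 0
  then show ?case by (intro exI[of _ 1]) simp
next
  case (pCons a p)
  then obtain n where n: "n > 0" "\<forall>i. of_int n * coeff p i \<in> \<int>" by blast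
  obtain x b where ab: "quotient_of a = (x, b)" by force
  have b0: "b > 0" using ab by (rule quotient_of_denom_pos)
  have a: "a = of_int x / of_int b" using ab by (rule quotient_of_div)
  have "of_int (n * b) * coeff (pCons a p) i \<in> \<int>" for i
  proof (cases i)
    case 0
    then show ?thesis using b0 unfolding a by simp
  next
    case (Suc j)
    have "of_int (n * b) * coeff p j = of_int b * (of_int n * coeff p j)" by simp
    also have "\<dots> \<in> \<int>" by (rule Ints_mult[OF Ints_of_int n(2)[rule_format]])
    finally show ?thesis using Suc by simp
  qed
  then show ?case using n b0 by (intro exI[of _ "n * b"]) simp
qed

lemma normalized_int:
  fixes d :: "rat poly"
  assumes "d \<noteq> 0" "lead_coeff d = 1"
  shows "\<exists>d0 ka. content d0 = 1 \<and> lead_coeff d0 > 0 \<and> ka \<noteq> 0 \<and> ratQ1 d0 = smult ka d"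
proof -
  obtain n :: int where n: "n > 0" "\<forall>i. of_int n * coeff d i \<in> \<int>" using denominators by blast
  define q where "q = map_poly (\<lambda>r. floor r) (smult (of_int n) d)"
  have q: "ratQ1 q = smult (of_int n) d"
  proof (rule poly_eqI)
    fix i
    have "of_int (floor (of_int n * coeff d i)) = of_int n * coeff d i"
      using n(2) by (metis Ints_cases floor_of_int)
    then show "coeff (ratQ1 q) i = coeff (smult (of_int n) d) i"
      by (simp add: q_def ratQ1_coeff coeff_map_poly)
  qed
  have q0: "q \<noteq> 0" using q n assms(1) by (auto simp flip: ratQ1_0_iff)
  define d0 where "d0 = primitive_part q"
  have c1: "content d0 = 1" unfolding d0_def using q0 by (rule content_primitive_part)
  have cq: "smult (content q) d0 = q" unfolding d0_def by (rule content_times_primitive_part)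
  have cpos: "content q > 0"
  proof -
    have "content q \<noteq> 0" using q0 by simp
    moreover have "\<bar>content q\<bar> = content q" using normalize_content[of q] by simp
    ultimately show ?thesis by linarith
  qed
  have "ratQ1 q = smult (of_int (content q)) (ratQ1 d0)"
    by (subst cq[symmetric]) (simp add: ratQ1_def map_poly_smult)
  then have e0: "smult (of_int (content q)) (ratQ1 d0) = smult (of_int n) d" using q by simp
  have "ratQ1 d0 = smult (1 / of_int (content q)) (smult (of_int (content q)) (ratQ1 d0))"
  proof -
    have cq0: "(of_int (content q)::rat) \<noteq> 0" using q0 by simp
    have "1 / of_int (content q) * of_int (content q) = (1::rat)" using cq0 by simp
    then show ?thesis by (simp only: smult_smult smult_1_left)
  qed
  also have "\<dots> = smult (of_int n / of_int (content q)) d" unfolding e0 by (simp add: smult_smult)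
  finally have e: "ratQ1 d0 = smult (of_int n / of_int (content q)) d" .
  have "lead_coeff q = content q * lead_coeff d0" using cq by (metis lead_coeff_smult)
  moreover have "of_int (lead_coeff q) = (of_int n :: rat)"
    using q assms by (metis lead_coeff_smult mult.right_neutral ratQ1_coeff ratQ1_degree)
  ultimately have "lead_coeff q = n" by (simp only: of_int_eq_iff)
  then have "content q * lead_coeff d0 > 0" using n \<open>lead_coeff q = content q * lead_coeff d0\<close> by simp
  then have "lead_coeff d0 > 0" using cpos by (simp add: zero_less_mult_iff)
  with c1 e n cpos show ?thesis by (intro exI[of _ d0] exI[of _ "of_int n / of_int (content q)"]) auto
qed


lemma gcd_lead:
  assumes "gcd P Q \<noteq> (0 :: rat poly)"
  shows "lead_coeff (gcd P Q) = 1"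
proof -
  have "unit_factor (gcd P Q) = 1" using assms by (simp add: unit_factor_gcd)
  then have "[:unit_factor (lead_coeff (gcd P Q)):] = 1" by (simp add: unit_factor_poly_def)
  then show ?thesis by (simp add: one_pCons)
qed

lemma the_min_unique:
  fixes L :: "'a \<Rightarrow> int"
  assumes "C X" and "\<And>D'. C D' \<Longrightarrow> L X \<le> L D' \<and> (L D' = L X \<longrightarrow> D' = X)"
  shows "(THE D. C D \<and> (\<forall>D'. C D' \<longrightarrow> L D \<le> L D')) = X"
proof (rule the_equality)
  show "C X \<and> (\<forall>D'. C D' \<longrightarrow> L X \<le> L D')" using assms by blast
  fix D assume D: "C D \<and> (\<forall>D'. C D' \<longrightarrow> L D \<le> L D')"
  then have "L X \<le> L D" "L D \<le> L X" using assms by blast+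
  then show "D = X" using assms(2)[of D] D by auto
qed

lemma coeff_mult_const2: "coeff (coeff (X * [:[:a:]:]) i) j = a * coeff (coeff X i) j"
  by (simp add: mult.commute[of X])

lemma coeff_mult_const1: "coeff (X * [:a:]) i = a * coeff X i"
  by (simp add: mult.commute[of X])


lemma uni_part:
  fixes f3 g2 d0 :: "int poly" and ka :: rat
  assumes PQ: "ratQ1 f3 \<noteq> 0 \<or> ratQ1 g2 \<noteq> 0"
    and c1: "content d0 = 1" and l0: "lead_coeff d0 > 0" and ka: "ka \<noteq> 0"
    and e: "ratQ1 d0 = smult ka (gcd (ratQ1 f3) (ratQ1 g2))"
  shows "gcdQ1 f3 g2 = d0"
  unfolding gcdQ1_def
proof (rule the_min_unique[where L = lead_coeff])
  define d where "d = gcd (ratQ1 f3) (ratQ1 g2)"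
  have d0: "d \<noteq> 0" using PQ unfolding d_def by simp
  have e': "ratQ1 d0 = smult ka d" using e unfolding d_def .
  have degd: "degree d0 = degree d" using e' ka by (metis degree_smult_eq ratQ1_degree)
  show "gcd_cand1 f3 g2 d0"
    unfolding gcd_cand1_def
  proof (intro conjI allI impI)
    show "ratQ1 d0 dvd ratQ1 f3" "ratQ1 d0 dvd ratQ1 g2"
      unfolding e' using ka by (simp_all add: smult_dvd_iff d_def)
    show "0 < lead_coeff d0" by (rule l0)
    fix E assume "E dvd ratQ1 f3 \<and> E dvd ratQ1 g2"
    then have "E dvd d" unfolding d_def by auto
    then have "degree E \<le> degree d" using d0 by (rule dvd_imp_degree_le)
    then show "degree E \<le> degree d0" using degd by simp
  qed
  fix D' assume cD: "gcd_cand1 f3 g2 D'"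
  then have D1: "ratQ1 D' dvd d" and D2: "degree d \<le> degree D'" and lD: "lead_coeff D' > 0"
    unfolding gcd_cand1_def d_def by auto
  obtain R where R: "d = ratQ1 D' * R" using D1 by (elim dvdE)
  have R0: "R \<noteq> 0" "ratQ1 D' \<noteq> 0" using R d0 by auto
  then have "degree d = degree D' + degree R" using R by (simp add: degree_mult_eq)
  then have "degree R = 0" using D2 by simp
  then have Rc: "R = [:coeff R 0:]" by (simp add: degree_0_id)
  define r where "r = coeff R 0"
  have r0: "r \<noteq> 0" using R0 Rc unfolding r_def by (metis pCons_0_0)
  have cf: "of_int (coeff D' i) = (1 / (ka * r)) * of_int (coeff d0 i)" for i
  proof -
    have "of_int (coeff d0 i) = ka * coeff d i" using e' by (metis coeff_smult ratQ1_coeff)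
    also have "coeff d i = r * of_int (coeff D' i)"
      unfolding R using Rc unfolding r_def by (metis coeff_mult_const1 ratQ1_coeff mult.commute)
    finally show ?thesis using ka r0 by (simp add: field_simps)
  qed
  have "1 / (ka * r) \<in> \<int>" using c1 by (rule int_scale) (metis cf Ints_of_int)
  then obtain k where k: "1 / (ka * r) = of_int k" by (elim Ints_cases)
  have "coeff D' i = k * coeff d0 i" for i using cf[of i] unfolding k
    by (simp only: of_int_mult[symmetric] of_int_eq_iff)
  then have D'k: "D' = smult k d0" by (intro poly_eqI) simp
  then have lk: "lead_coeff D' = k * lead_coeff d0" by simp
  with lD l0 have "k > 0" by (simp add: zero_less_mult_iff)
  then show "lead_coeff d0 \<le> lead_coeff D' \<and> (lead_coeff D' = lead_coeff d0 \<longrightarrow> D' = d0)"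
    using lk l0 D'k by auto
qed


lemma ratQ2_coeff2: "coeff (coeff (ratQ2 X) i) j = of_int (coeff (coeff X i) j)"
  by (simp add: ratQ2_coeff ratQ1_coeff)

lemma bi_part:
  fixes A B :: "int poly poly" and d0 :: "int poly" and ka :: rat and T :: "rat poly poly"
  assumes c1: "content d0 = 1" and l0: "lead_coeff d0 > 0" and ka: "ka \<noteq> 0"
    and T0: "T \<noteq> 0"
    and TA: "T dvd ratQ2 A" and TB: "T dvd ratQ2 B"
    and Tg: "\<And>E. E dvd ratQ2 A \<Longrightarrow> E dvd ratQ2 B \<Longrightarrow> E dvd T"
    and S0: "ratQ2 (whom d0 e tau) = [:[:ka:]:] * T"
  shows "gcdQ2 A B = whom d0 e tau"
  unfolding gcdQ2_def
proof (rule the_min_unique[where L = "\<lambda>D. lead_coeff (lead_coeff D)"])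
  define S where "S = whom d0 e tau"
  have "ka dvd 1" using ka by (intro dvdI[of _ _ "1 / ka"]) simp
  then have u: "is_unit [:[:ka:]:]" by (simp add: is_unit_const_poly_iff)
  have d00: "d0 \<noteq> 0" using c1 by auto
  have lS: "lead_coeff (lead_coeff S) = lead_coeff d0"
    unfolding S_def whom_W W_degree(2)[OF d00] using d00 by (simp add: lead_coeff_monom degree_monom_eq)
  have S0': "ratQ2 S = [:[:ka:]:] * T" using S0 unfolding S_def .
  have S00: "ratQ2 S \<noteq> 0" using S0' T0 ka by simp
  show "gcd_cand2 A B (whom d0 e tau)"
    unfolding gcd_cand2_def S_def[symmetric]
  proof (intro conjI allI impI)
    show "ratQ2 S dvd ratQ2 A" "ratQ2 S dvd ratQ2 B"
      unfolding S0' using u TA TB by (simp_all only: mult_unit_dvd_iff')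
    show "0 < lead_coeff (lead_coeff S)" using lS l0 by simp
    fix E assume "E dvd ratQ2 A \<and> E dvd ratQ2 B"
    then have "E dvd T" using Tg by blast
    then have "E dvd ratQ2 S" unfolding S0' by (rule dvd_mult)
    then have "total_degree E \<le> total_degree (ratQ2 S)" using S00 by (rule td_dvd)
    then show "total_degree E \<le> total_degree S" by (simp add: td_ratQ2)
  qed
  fix D' assume cD: "gcd_cand2 A B D'"
  then have D1: "ratQ2 D' dvd T" and D2: "total_degree T \<le> total_degree D'"
    and lD: "lead_coeff (lead_coeff D') > 0"
    unfolding gcd_cand2_def using Tg TA TB by auto
  obtain R where R: "T = ratQ2 D' * R" using D1 by (elim dvdE)
  have R0: "R \<noteq> 0" "ratQ2 D' \<noteq> 0" using R T0 by auto
  then have "total_degree T = total_degree D' + total_degree R"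
    using R by (simp add: td_mult td_ratQ2)
  then have "total_degree R = 0" using D2 by simp
  then have Rc: "R = [:[:coeff (coeff R 0) 0:]:]" by (rule td_zero_const)
  define r where "r = coeff (coeff R 0) 0"
  have r0: "r \<noteq> 0" using R0 Rc unfolding r_def by (metis pCons_0_0)
  have cf: "of_int (coeff (coeff D' i) j) = (1 / (ka * r)) * of_int (coeff (coeff S i) j)" for i j
  proof -
    have k1: "[:[:ka:]:] * [:[:r:]:] = [:[:ka * r:]:]" by simp
    have "ratQ2 S = [:[:ka:]:] * (ratQ2 D' * [:[:r:]:])"
      unfolding S0' R by (subst Rc) (simp only: r_def)
    also have "\<dots> = ratQ2 D' * ([:[:ka:]:] * [:[:r:]:])" by (simp only: mult_ac)
    finally have "ratQ2 S = ratQ2 D' * [:[:ka * r:]:]" unfolding k1 .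
    then have "of_int (coeff (coeff S i) j) = (ka * r) * of_int (coeff (coeff D' i) j)"
      by (metis coeff_mult_const2 ratQ2_coeff2)
    then show ?thesis using ka r0 by (simp add: field_simps)
  qed
  have cS: "coeff (coeff S i) (e - tau * i) = coeff d0 i" for i
    unfolding S_def whom_W by (simp add: coeff_W)
  have "1 / (ka * r) \<in> \<int>" using c1
  proof (rule int_scale)
    fix i show "1 / (ka * r) * of_int (coeff d0 i) \<in> \<int>"
      using cf[of i "e - tau * i"] unfolding cS by (metis Ints_of_int)
  qed
  then obtain k where k: "1 / (ka * r) = of_int k" by (elim Ints_cases)
  have "coeff (coeff D' i) j = k * coeff (coeff S i) j" for i j using cf[of i j] unfolding k
    by (simp only: of_int_mult[symmetric] of_int_eq_iff)
  then have D'k: "D' = smult [:k:] S" by (intro poly_eqI) (simp add: poly_eq_iff)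
  then have lk: "lead_coeff (lead_coeff D') = k * lead_coeff (lead_coeff S)"
    by (simp add: lead_coeff_mult)
  with lD l0 lS have "k > 0" by (simp add: zero_less_mult_iff)
  then show "lead_coeff (lead_coeff (whom d0 e tau)) \<le> lead_coeff (lead_coeff D') \<and>
    (lead_coeff (lead_coeff D') = lead_coeff (lead_coeff (whom d0 e tau)) \<longrightarrow> D' = whom d0 e tau)"
    using lk lS l0 D'k unfolding S_def[symmetric] by (auto simp: one_pCons[symmetric])
qed


theorem lemma2p2:
  fixes upsilon m tau :: nat and f g :: "int poly" and S :: "int poly poly"
  assumes "upsilon \<in> {1, 2}" and "m > 0" and "tau > 0"
    and "m = 1 \<or> upsilon * tau = 1"
    and "smult 4 (f ^ 3) + smult 27 (g ^ 2) \<noteq> 0"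
    and "\<not> (\<exists>r::real. poly (map_poly of_int f) r = 0 \<and> poly (map_poly of_int g) r = 0)"
    and "max (real (degree f) / 2) (real (degree g) / 3) = 2 * real m / (real upsilon * real tau)"
    and "S = gcdQ2 ((whom f (2 * (if upsilon = 1 then 2 * m else 1)) tau) ^ 3)
                   ((whom g (3 * (if upsilon = 1 then 2 * m else 1)) tau) ^ 2)"
  shows "gcdQ1 (f ^ 3) (g ^ 2) = at_y1 S"
proof -
  define sg where "sg = (if upsilon = 1 then 2 * m else 1)"
  have Sdef: "S = gcdQ2 ((whom f (2 * sg) tau) ^ 3) ((whom g (3 * sg) tau) ^ 2)"
    using assms(8) unfolding sg_def .
  have ut: "real upsilon * real tau > 0" using assms(1,3) by auto
  have rf: "real (degree f) / 2 \<le> 2 * real m / (real upsilon * real tau)"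
    and rg: "real (degree g) / 3 \<le> 2 * real m / (real upsilon * real tau)"
    using assms(7) by (metis max.cobounded1 max.cobounded2)+
  have "real (degree f) * (real upsilon * real tau) \<le> 4 * real m"
    using rf ut by (simp add: field_simps)
  then have nf: "degree f * upsilon * tau \<le> 4 * m"
    by (metis (mono_tags, opaque_lifting) of_nat_le_iff of_nat_mult of_nat_numeral mult.assoc)
  have "real (degree g) * (real upsilon * real tau) \<le> 6 * real m"
    using rg ut by (simp add: field_simps)
  then have ng: "degree g * upsilon * tau \<le> 6 * m"
    by (metis (mono_tags, opaque_lifting) of_nat_le_iff of_nat_mult of_nat_numeral mult.assoc)
  have hf: "tau * degree f \<le> 2 * sg" and hg: "tau * degree g \<le> 3 * sg"
  proof -
    have "upsilon = 1 \<or> (upsilon = 2 \<and> m = 1)" using assms(1,3,4) by auto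
    then show "tau * degree f \<le> 2 * sg" "tau * degree g \<le> 3 * sg"
      using nf ng unfolding sg_def by (auto simp: mult.commute mult.left_commute)
  qed
  define s where "s = 6 * sg"
  define F where "F = ratQ1 f"
  define G where "G = ratQ1 g"
  define P where "P = ratQ1 (f ^ 3)"
  define Q where "Q = ratQ1 (g ^ 2)"
  have PF: "P = F ^ 3" unfolding P_def F_def by (rule ratQ1_power)
  have QG: "Q = G ^ 2" unfolding Q_def G_def by (rule ratQ1_power)
  have hF: "tau * degree F \<le> 2 * sg" using hf unfolding F_def by simp
  have hG: "tau * degree G \<le> 3 * sg" using hg unfolding G_def by simp
  have dP: "tau * degree P \<le> s"
  proof -
    have "tau * degree P \<le> tau * (degree F * 3)" unfolding PF by (intro mult_le_mono2 degree_power_le)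
    also have "\<dots> = 3 * (tau * degree F)" by simp
    also have "\<dots> \<le> s" using hF unfolding s_def by simp
    finally show ?thesis .
  qed
  have dQ: "tau * degree Q \<le> s"
  proof -
    have "tau * degree Q \<le> tau * (degree G * 2)" unfolding QG by (intro mult_le_mono2 degree_power_le)
    also have "\<dots> = 2 * (tau * degree G)" by simp
    also have "\<dots> \<le> s" using hG unfolding s_def by simp
    finally show ?thesis .
  qed
  have PQ: "P \<noteq> 0 \<or> Q \<noteq> 0"
  proof -
    have "f \<noteq> 0 \<or> g \<noteq> 0" using assms(5) by auto
    then show ?thesis unfolding PF QG F_def G_def by auto
  qed
  have hA: "ratQ2 ((whom f (2 * sg) tau) ^ 3) = W tau s P"
    unfolding ratQ2_power ratQ2_whom F_def[symmetric] PF W_power[OF hF] s_def by simp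
  have hB: "ratQ2 ((whom g (3 * sg) tau) ^ 2) = W tau s Q"
    unfolding ratQ2_power ratQ2_whom G_def[symmetric] QG W_power[OF hG] s_def by simp
  define d where "d = gcd P Q"
  have d0: "d \<noteq> 0" using PQ unfolding d_def by simp
  have ld: "lead_coeff d = 1" using d0 unfolding d_def by (rule gcd_lead)
  obtain d0 ka where d0p: "content d0 = 1" "lead_coeff d0 > 0" "ka \<noteq> 0" "ratQ1 d0 = smult ka d"
    using normalized_int[OF d0 ld] by blast
  define e where "e = tau * degree d + min (s - tau * degree P) (s - tau * degree Q)"
  define T where "T = W tau e d"
  note C = core[OF PQ dP dQ, folded d_def, folded e_def, folded T_def]
  have T0: "T \<noteq> 0" unfolding T_def using d0 by simp
  have ST: "ratQ2 (whom d0 e tau) = [:[:ka:]:] * T"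
    unfolding ratQ2_whom d0p(4) W_smult T_def by simp
  have "gcdQ2 ((whom f (2 * sg) tau) ^ 3) ((whom g (3 * sg) tau) ^ 2) = whom d0 e tau"
    by (rule bi_part[OF d0p(1,2,3) T0]) (use C ST in \<open>simp_all add: hA hB\<close>)
  then have "at_y1 S = d0" unfolding Sdef by (simp add: at_y1_whom)
  moreover have "gcdQ1 (f ^ 3) (g ^ 2) = d0"
    by (rule uni_part[OF _ d0p(1,2,3)]) (use PQ d0p(4) in \<open>simp_all add: P_def Q_def d_def\<close>)
  ultimately show ?thesis by simp
qed

end
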